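(* For every $h\in\widehat{\operatorname{PC}^{\bowtie}}$ there exist order-preserving homeomorphisms $\phi,\psi$ of $[0,1[$ and elements $f,g\in\widehat{\operatorname{IET}^{\bowtie}}$ such that $h=\psi\circ f=g\circ\phi$.
   Context: $X=[0,1[$. $\widehat{\operatorname{PC}^{\bowtie}}$ is the group of bijections $X\to X$ continuous outside a finite subset of $X$. $\widehat{\operatorname{IET}^{\bowtie}}$ is the subgroup of bijections $f$ for which there is a finite partition of $X$ into intervals $[a,b[$ such that on each open interval $]a,b[$, $f$ is of the form $x\mapsto x+c$ or $x\mapsto -x+c$. *)

theory Defs
  imports "HOL-Analysis.Analysis"
begin

definition X :: "real set" where "X = {0..<1}"

definition PC_hat :: "(real \<Rightarrow> real) set" where
  "PC_hat = {h. bij_betw h X X \<and>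
      (\<exists>F. finite F \<and> (\<forall>x\<in>X - F. continuous (at x within X) h))}"

definition IET_hat :: "(real \<Rightarrow> real) set" where
  "IET_hat = {f. bij_betw f X X \<and>
      (\<exists>(a::nat \<Rightarrow> real) n. a 0 = 0 \<and> a n = 1 \<and> (\<forall>i<n. a i < a (Suc i)) \<and>
         (\<forall>i<n. \<exists>c. (\<forall>x\<in>{a i<..<a (Suc i)}. f x = x + c) \<or>
                      (\<forall>x\<in>{a i<..<a (Suc i)}. f x = - x + c)))}"

definition ord_homeo :: "(real \<Rightarrow> real) \<Rightarrow> bool" where
  "ord_homeo \<phi> \<longleftrightarrow> (\<exists>\<phi>'. homeomorphism X X \<phi> \<phi>') \<and> mono_on X \<phi>"

end

theory Submission
  imports Defs
begin


definition part :: "(nat \<Rightarrow> real) \<Rightarrow> nat \<Rightarrow> bool" where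
  "part a n \<longleftrightarrow> a 0 = 0 \<and> a n = 1 \<and> (\<forall>i<n. a i < a (Suc i))"

lemma part_less: "part a n \<Longrightarrow> i < j \<Longrightarrow> j \<le> n \<Longrightarrow> a i < a j"
proof (induct j)
  case 0 then show ?case by simp
next
  case (Suc j)
  then have "a j < a (Suc j)" by (auto simp: part_def)
  with Suc show ?case by (cases "i = j") auto
qed

lemma part_le: "part a n \<Longrightarrow> i \<le> j \<Longrightarrow> j \<le> n \<Longrightarrow> a i \<le> a j"
  using part_less[of a n i j] by (cases "i = j") auto

lemma part_range: "part a n \<Longrightarrow> i \<le> n \<Longrightarrow> 0 \<le> a i \<and> a i \<le> 1"
  using part_le[of a n 0 i] part_le[of a n i n] by (auto simp: part_def)

lemma part_piece_sub: "part a n \<Longrightarrow> i < n \<Longrightarrow> {a i<..<a (Suc i)} \<subseteq> {0<..<1}"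
  using part_range[of a n i] part_range[of a n "Suc i"] by auto

lemma part_piece_X: "part a n \<Longrightarrow> i < n \<Longrightarrow> {a i<..<a (Suc i)} \<subseteq> X"
  using part_piece_sub[of a n i] by (auto simp: X_def)

lemma part_cover: assumes "part a n" "x \<in> X" shows "\<exists>i<n. a i \<le> x \<and> x < a (Suc i)"
proof -
  define I where "I = {i. i \<le> n \<and> a i \<le> x}"
  have fin: "finite I" unfolding I_def by auto
  have "0 \<in> I" using assms by (auto simp: I_def part_def X_def)
  then have ne: "I \<noteq> {}" by auto
  define i where "i = Max I"
  have iI: "i \<in> I" using fin ne Max_in i_def by blast
  have "i \<noteq> n" using iI assms by (auto simp: I_def part_def X_def)
  then have "i < n" using iI by (auto simp: I_def)
  moreover have "Suc i \<notin> I" using Max_ge[OF fin, of "Suc i"] i_def by auto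
  ultimately show ?thesis using iI by (auto simp: I_def intro!: exI[of _ i])
qed

lemma part_idx_unique:
  assumes "part a n" "i < n" "j < n" "a i \<le> x" "x < a (Suc i)" "a j \<le> x" "x < a (Suc j)"
  shows "i = j"
proof (rule ccontr)
  assume "i \<noteq> j"
  then consider "i < j" | "j < i" by linarith
  then show False
  proof cases
    case 1 then have "a (Suc i) \<le> a j" using part_le[OF assms(1), of "Suc i" j] assms by auto
    then show False using assms by auto
  next
    case 2 then have "a (Suc j) \<le> a i" using part_le[OF assms(1), of "Suc j" i] assms by auto
    then show False using assms by auto
  qed
qed

lemma part_pieces_disj:
  assumes "part a n" "i < n" "j < n" "i \<noteq> j"
  shows "{a i<..<a (Suc i)} \<inter> {a j<..<a (Suc j)} = {}"
proof -
  have False if "x \<in> {a i<..<a (Suc i)}" "x \<in> {a j<..<a (Suc j)}" for x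
    using part_idx_unique[OF assms(1-3), of x] that assms(4) by auto
  then show ?thesis by blast
qed

lemma part_point_not_piece:
  assumes "part a n" "i < n" "j < n"
  shows "a j \<notin> {a i<..<a (Suc i)}"
proof
  assume "a j \<in> {a i<..<a (Suc i)}"
  then have "a i \<le> a j" "a j < a (Suc i)" by auto
  moreover have "a j < a (Suc j)" using assms by (auto simp: part_def)
  ultimately have "i = j" using part_idx_unique[OF assms(1,2,3)] by auto
  then show False using \<open>a j \<in> _\<close> by auto
qed

lemma part_exists:
  assumes "finite S"
  shows "\<exists>a n. part a n \<and> (\<forall>i<n. {a i<..<a (Suc i)} \<inter> S = {})"
proof -
  define T where "T = insert 0 (insert 1 (S \<inter> {0<..<(1::real)}))"
  have finT: "finite T" using assms by (auto simp: T_def)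
  define L where "L = sorted_list_of_set T"
  have sL: "sorted_wrt (<) L" unfolding L_def by (rule strict_sorted_list_of_set)
  have setL: "set L = T" unfolding L_def using finT by simp
  have T01: "T \<subseteq> {0..1}" by (auto simp: T_def)
  have lt: "L ! i < L ! k" if "i < k" "k < length L" for i k
    using sorted_wrt_nth_less[OF sL that] .
  have lt_iff: "L ! i < L ! k \<longleftrightarrow> i < k" if "i < length L" "k < length L" for i k
  proof
    assume "L ! i < L ! k"
    show "i < k"
    proof (rule ccontr)
      assume "\<not> i < k"
      then have "k < i \<or> k = i" by auto
      then show False using lt[of k i] that \<open>L ! i < L ! k\<close> by auto
    qed
  qed (use lt that in auto)
  obtain k0 where k0: "k0 < length L" "L ! k0 = 0" using setL by (metis T_def in_set_conv_nth insertI1)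
  obtain k1 where k1: "k1 < length L" "L ! k1 = 1" using setL by (metis T_def in_set_conv_nth insertI1 insertI2)
  have inT: "L ! k \<in> T" if "k < length L" for k using setL that nth_mem by blast
  have "k0 = 0"
  proof (rule ccontr)
    assume "k0 \<noteq> 0"
    then have "L ! 0 < L ! k0" using lt[of 0 k0] k0 by auto
    moreover have "L ! 0 \<ge> 0" using inT[of 0] k0 T01 by fastforce
    ultimately show False using k0 by auto
  qed
  define n where "n = length L - 1"
  have "k1 = n"
  proof (rule ccontr)
    assume "k1 \<noteq> n"
    then have "k1 < n" using k1 n_def by auto
    then have "L ! k1 < L ! n" using lt[of k1 n] k1 n_def by auto
    moreover have "L ! n \<le> 1" using inT[of n] k1 T01 n_def by fastforce
    ultimately show False using k1 by auto
  qed
  have nlen: "n < length L" using k1 n_def by auto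
  have "part (\<lambda>i. L ! i) n"
    unfolding part_def using k0 k1 \<open>k0 = 0\<close> \<open>k1 = n\<close> lt nlen by auto
  moreover have "{L ! i<..<L ! (Suc i)} \<inter> S = {}" if "i < n" for i
  proof (rule ccontr)
    assume "{L ! i<..<L ! (Suc i)} \<inter> S \<noteq> {}"
    then obtain s where s: "s \<in> S" "L ! i < s" "s < L ! Suc i" by auto
    have "L ! i \<ge> 0" "L ! Suc i \<le> 1" using inT[of i] inT[of "Suc i"] that nlen T01 by auto
    then have "s \<in> T" using s by (auto simp: T_def)
    then obtain k where k: "k < length L" "L ! k = s" using setL by (metis in_set_conv_nth)
    have "i < k" using lt_iff[of i k] k s that nlen by auto
    moreover have "k < Suc i" using lt_iff[of k "Suc i"] k s that nlen by auto
    ultimately show False by auto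
  qed
  ultimately show ?thesis by blast
qed



lemma mid_mono:
  fixes u :: "real \<Rightarrow> real"
  assumes "continuous_on {a..b} u" "inj_on u {a..b}" "u a < u b" "a < z" "z < b"
  shows "u a < u z \<and> u z < u b"
  using continuous_inj_imp_mono[OF assms(4,5,1,2)] assms(3) by auto

lemma inc_from_ends:
  fixes u :: "real \<Rightarrow> real"
  assumes c: "continuous_on {a..b} u" and i: "inj_on u {a..b}" and ab: "u a < u b"
    and xy: "a \<le> x" "x < y" "y \<le> b"
  shows "u x < u y"
proof -
  have xb: "u x < u b"
  proof (cases "x = a")
    case True then show ?thesis using ab by simp
  next
    case False then show ?thesis using mid_mono[OF c i ab, of x] xy by auto
  qed
  show ?thesis
  proof (cases "y = b")
    case True then show ?thesis using xb by simp
  next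
    case False
    have c': "continuous_on {x..b} u" using xy by (intro continuous_on_subset[OF c]) auto
    have i': "inj_on u {x..b}" using xy by (intro inj_on_subset[OF i]) auto
    show ?thesis using mid_mono[OF c' i' xb, of y] xy False by auto
  qed
qed

lemma piece_mono:
  fixes u :: "real \<Rightarrow> real"
  assumes pq: "p < q" and c: "continuous_on {p<..<q} u" and i: "inj_on u {p<..<q}"
  shows "\<exists>s. (s = 1 \<or> s = -1) \<and> (\<forall>x\<in>{p<..<q}. \<forall>y\<in>{p<..<q}. x < y \<longrightarrow> s * u x < s * u y)"
proof -
  define x0 where "x0 = p + (q - p) / 3"
  define y0 where "y0 = p + 2 * (q - p) / 3"
  have x0y0: "p < x0" "x0 < y0" "y0 < q" using pq by (auto simp: x0_def y0_def field_simps)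
  define s :: real where "s = (if u x0 < u y0 then 1 else -1)"
  have s: "s = 1 \<or> s = -1" by (auto simp: s_def)
  define v where "v = (\<lambda>x. s * u x)"
  have cv: "continuous_on {p<..<q} v" unfolding v_def by (intro continuous_intros c)
  have iv: "inj_on v {p<..<q}" using i s unfolding v_def inj_on_def by auto
  have "u x0 \<noteq> u y0" using i x0y0 unfolding inj_on_def by force
  then have v0: "v x0 < v y0" using s by (auto simp: v_def s_def)
  have "v x < v y" if xy: "x \<in> {p<..<q}" "y \<in> {p<..<q}" "x < y" for x y
  proof -
    define a where "a = min x x0"
    define b where "b = max y y0"
    have sub: "{a..b} \<subseteq> {p<..<q}" using xy x0y0 by (auto simp: a_def b_def)
    have cab: "continuous_on {a..b} v" using cv sub by (rule continuous_on_subset)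
    have iab: "inj_on v {a..b}" using iv sub by (rule inj_on_subset)
    have ab: "a < b" using xy x0y0 by (auto simp: a_def b_def)
    have "v a \<noteq> v b" using iab ab unfolding inj_on_def by force
    moreover have "\<not> v b < v a"
    proof
      assume "v b < v a"
      then have "(\<lambda>x. - v x) a < (\<lambda>x. - v x) b" by simp
      moreover have "continuous_on {a..b} (\<lambda>x. - v x)" by (intro continuous_intros cab)
      moreover have "inj_on (\<lambda>x. - v x) {a..b}" using iab unfolding inj_on_def by auto
      ultimately have "- v x0 < - v y0"
        using inc_from_ends[of a b "\<lambda>x. - v x" x0 y0] x0y0 by (auto simp: a_def b_def)
      then show False using v0 by simp
    qed
    ultimately have "v a < v b" by auto
    then show ?thesis using inc_from_ends[OF cab iab, of x y] xy by (auto simp: a_def b_def)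
  qed
  then show ?thesis using s unfolding v_def by blast
qed

lemma image_open_interval:
  fixes u :: "real \<Rightarrow> real"
  assumes c: "continuous_on P u" and P: "is_interval P" "P \<noteq> {}"
    and bd: "u ` P \<subseteq> {0..1}"
    and nomin: "\<And>x. x \<in> P \<Longrightarrow> \<exists>y\<in>P. u y < u x"
    and nomax: "\<And>x. x \<in> P \<Longrightarrow> \<exists>y\<in>P. u x < u y"
  shows "Inf (u ` P) < Sup (u ` P) \<and> u ` P = {Inf (u ` P)<..<Sup (u ` P)}"
proof -
  have bb: "bdd_below (u ` P)" "bdd_above (u ` P)" using bd by (meson bdd_above_Icc bdd_below_Icc bdd_above_mono bdd_below_mono)+
  have ne: "u ` P \<noteq> {}" using P by auto
  have int: "is_interval (u ` P)"
    using connected_continuous_image[OF c] P is_interval_connected_1 by blast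
  have sub: "u ` P \<subseteq> {Inf (u ` P)<..<Sup (u ` P)}"
  proof
    fix t assume "t \<in> u ` P"
    then obtain x where x: "x \<in> P" "t = u x" by auto
    obtain y1 where "y1 \<in> P" "u y1 < u x" using nomin x by auto
    then have "Inf (u ` P) < t" using cInf_lower[OF _ bb(1), of "u y1"] x by force
    moreover obtain y2 where "y2 \<in> P" "u x < u y2" using nomax x by auto
    then have "t < Sup (u ` P)" using cSup_upper[OF _ bb(2), of "u y2"] x by force
    ultimately show "t \<in> {Inf (u ` P)<..<Sup (u ` P)}" by auto
  qed
  have sup: "{Inf (u ` P)<..<Sup (u ` P)} \<subseteq> u ` P"
  proof
    fix t assume t: "t \<in> {Inf (u ` P)<..<Sup (u ` P)}"
    obtain y1 where y1: "y1 \<in> u ` P" "y1 < t" using t cInf_less_iff[OF ne bb(1)] by auto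
    obtain y2 where y2: "y2 \<in> u ` P" "t < y2" using t less_cSup_iff[OF ne bb(2)] by auto
    show "t \<in> u ` P" using int y1 y2 unfolding is_interval_1 by (meson less_imp_le)
  qed
  obtain x where "x \<in> P" using P by auto
  then have "u x \<in> {Inf (u ` P)<..<Sup (u ` P)}" using sub by auto
  then show ?thesis using sub sup by auto
qed

lemma piece_struct:
  fixes u :: "real \<Rightarrow> real"
  assumes pq: "p < q" and c: "continuous_on {p<..<q} u" and i: "inj_on u {p<..<q}"
    and bd: "u ` {p<..<q} \<subseteq> {0..1}"
  shows "\<exists>s c d. (s = 1 \<or> s = -1) \<and> (\<forall>x\<in>{p<..<q}. \<forall>y\<in>{p<..<q}. x < y \<longrightarrow> s * u x < s * u y)
     \<and> c < d \<and> u ` {p<..<q} = {c<..<d}"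
proof -
  obtain s where s: "s = 1 \<or> s = -1" and m: "\<forall>x\<in>{p<..<q}. \<forall>y\<in>{p<..<q}. x < y \<longrightarrow> s * u x < s * u y"
    using piece_mono[OF assms(1-3)] by blast
  have lower: "\<exists>y\<in>{p<..<q}. y < x" if "x \<in> {p<..<q}" for x
    using that by (intro bexI[of _ "(p + x) / 2"]) auto
  have upper: "\<exists>y\<in>{p<..<q}. x < y" if "x \<in> {p<..<q}" for x
    using that by (intro bexI[of _ "(q + x) / 2"]) auto
  have nomin: "\<exists>y\<in>{p<..<q}. u y < u x" if "x \<in> {p<..<q}" for x
  proof (cases "s = 1")
    case True then show ?thesis using lower[OF that] m that by force
  next
    case False then have "s = -1" using s by auto
    then show ?thesis using upper[OF that] m that by force
  qed
  have nomax: "\<exists>y\<in>{p<..<q}. u x < u y" if "x \<in> {p<..<q}" for x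
  proof (cases "s = 1")
    case True then show ?thesis using upper[OF that] m that by force
  next
    case False then have "s = -1" using s by auto
    then show ?thesis using lower[OF that] m that by force
  qed
  have "is_interval {p<..<q}" by (simp add: is_interval_1)
  then show ?thesis using image_open_interval[OF c _ _ bd nomin nomax] pq s m by auto
qed



lemma smono_cont:
  fixes \<phi> :: "real \<Rightarrow> real"
  assumes sm: "strict_mono_on X \<phi>" and im: "\<phi> ` X = X"
  shows "continuous_on X \<phi>"
proof -
  define \<Phi> where "\<Phi> = (\<lambda>x. if x \<in> X then \<phi> x else x)"
  have inX: "\<phi> x \<in> X" if "x \<in> X" for x using im that by auto
  have mono: "\<Phi> x \<le> \<Phi> y" if "x \<le> y" for x y
  proof (cases "x \<in> X")
    case True
    show ?thesis
    proof (cases "y \<in> X")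
      case True
      then show ?thesis using \<open>x \<in> X\<close> sm that
        by (cases "x = y") (auto simp: \<Phi>_def dest: strict_mono_onD intro: less_imp_le)
    next
      case False
      then have "y \<ge> 1" using that True by (auto simp: X_def)
      then show ?thesis using inX[OF True] False True by (auto simp: \<Phi>_def X_def)
    qed
  next
    case False
    show ?thesis
    proof (cases "y \<in> X")
      case True
      then have "x < 0" using that False by (auto simp: X_def)
      then show ?thesis using inX[OF True] False True by (auto simp: \<Phi>_def X_def)
    next
      case False
      then show ?thesis using \<open>x \<notin> X\<close> that by (auto simp: \<Phi>_def)
    qed
  qed
  have "\<Phi> ` UNIV = UNIV"
  proof -
    have "y \<in> \<Phi> ` UNIV" for y
    proof (cases "y \<in> X")
      case True
      then obtain x where "x \<in> X" "y = \<phi> x" using im by auto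
      then show ?thesis by (auto simp: \<Phi>_def intro!: image_eqI[of _ _ x])
    next
      case False
      then show ?thesis by (auto simp: \<Phi>_def intro!: image_eqI[of _ _ y])
    qed
    then show ?thesis by auto
  qed
  then have "continuous_on UNIV \<Phi>" using mono by (intro continuous_onI_mono) auto
  then have "continuous_on X \<Phi>" by (rule continuous_on_subset) auto
  then show ?thesis by (rule continuous_on_cong[THEN iffD1, rotated 2]) (auto simp: \<Phi>_def)
qed

lemma smono_ord_homeo:
  fixes \<phi> :: "real \<Rightarrow> real"
  assumes sm: "strict_mono_on X \<phi>" and im: "\<phi> ` X = X"
  shows "ord_homeo \<phi> \<and> ord_homeo (inv_into X \<phi>) \<and> homeomorphism X X \<phi> (inv_into X \<phi>)"
proof -
  have inj: "inj_on \<phi> X" using sm by (rule strict_mono_on_imp_inj_on)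
  have bij: "bij_betw \<phi> X X" using inj im by (simp add: bij_betw_def)
  define \<phi>' where "\<phi>' = inv_into X \<phi>"
  have bij': "bij_betw \<phi>' X X" unfolding \<phi>'_def using bij by (rule bij_betw_inv_into)
  have ff: "\<phi>' (\<phi> x) = x" if "x \<in> X" for x unfolding \<phi>'_def using inj that by (rule inv_into_f_f)
  have ff2: "\<phi> (\<phi>' y) = y" if "y \<in> X" for y unfolding \<phi>'_def using im that by (metis f_inv_into_f)
  have sm': "strict_mono_on X \<phi>'"
  proof (rule strict_mono_onI)
    fix r s assume rs: "r \<in> X" "s \<in> X" "r < s"
    show "\<phi>' r < \<phi>' s"
    proof (rule ccontr)
      assume "\<not> \<phi>' r < \<phi>' s"
      then have "\<phi>' s \<le> \<phi>' r" by auto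
      moreover have "\<phi>' s \<in> X" "\<phi>' r \<in> X" using bij' rs by (auto simp: bij_betw_def)
      ultimately have "\<phi> (\<phi>' s) \<le> \<phi> (\<phi>' r)" using sm
        by (cases "\<phi>' s = \<phi>' r") (auto dest: strict_mono_onD intro: less_imp_le)
      then show False using ff2 rs by auto
    qed
  qed
  have im': "\<phi>' ` X = X" using bij' by (simp add: bij_betw_def)
  have c: "continuous_on X \<phi>" using smono_cont[OF sm im] .
  have c': "continuous_on X \<phi>'" using smono_cont[OF sm' im'] .
  have h: "homeomorphism X X \<phi> \<phi>'" unfolding homeomorphism_def using c c' im im' ff ff2 by auto
  have h': "homeomorphism X X \<phi>' \<phi>" using h by (rule homeomorphism_symD)
  show ?thesis unfolding ord_homeo_def \<phi>'_def[symmetric]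
    using h h' sm sm' strict_mono_on_imp_mono_on by blast
qed

lemma measure_tiling:
  fixes c d :: "nat \<Rightarrow> real"
  assumes cd: "\<And>i. i < n \<Longrightarrow> c i < d i"
    and sub: "\<And>i. i < n \<Longrightarrow> {c i<..<d i} \<subseteq> X"
    and disj: "\<And>i j. i < n \<Longrightarrow> j < n \<Longrightarrow> i \<noteq> j \<Longrightarrow> {c i<..<d i} \<inter> {c j<..<d j} = {}"
    and fin: "finite E" and cov: "X - (\<Union>i<n. {c i<..<d i}) \<subseteq> E"
  shows "(\<Sum>i<n. d i - c i) = 1"
proof -
  define U where "U = (\<Union>i<n. {c i<..<d i})"
  have mU: "measure lborel U = (\<Sum>i<n. measure lborel {c i<..<d i})"
    unfolding U_def
  proof (rule measure_finite_Union)
    show "disjoint_family_on (\<lambda>i. {c i<..<d i}) {..<n}"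
      unfolding disjoint_family_on_def using disj by blast
    show "emeasure lborel {c i<..<d i} \<noteq> \<infinity>" if "i \<in> {..<n}" for i
      using cd[of i] that by (simp add: emeasure_lborel_Ioo less_imp_le)
  qed auto
  also have "\<dots> = (\<Sum>i<n. d i - c i)" using cd by (intro sum.cong) (auto simp: less_imp_le)
  finally have mU: "measure lborel U = (\<Sum>i<n. d i - c i)" .
  have I: "{0..1::real} \<in> fmeasurable lborel" by (rule fmeasurable_compact) auto
  have UX: "U \<subseteq> {0..1}" using sub unfolding U_def X_def by fastforce
  have Us: "U \<in> sets lborel" unfolding U_def by auto
  have "measure lborel U \<le> measure lborel {0..1::real}"
    by (rule measure_mono_fmeasurable[OF UX Us I])
  then have le: "measure lborel U \<le> 1" by simp
  define E' where "E' = insert 1 (E \<inter> {0..1})"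
  have finE': "finite E'" using fin by (auto simp: E'_def)
  have E's: "E' \<in> sets lborel" using finE' by (auto intro!: borel_closed finite_imp_closed)
  have "{0..1} \<subseteq> U \<union> E'" using cov by (auto simp: U_def E'_def X_def)
  moreover have "U \<union> E' \<in> fmeasurable lborel"
    proof (rule fmeasurableI2[OF I])
    show "U \<union> E' \<subseteq> {0..1}" using UX by (auto simp: E'_def)
    show "U \<union> E' \<in> sets lborel" using Us E's by (rule sets.Un)
  qed
  ultimately have "measure lborel {0..1::real} \<le> measure lborel (U \<union> E')"
    by (intro measure_mono_fmeasurable) auto
  also have "\<dots> \<le> measure lborel U + measure lborel E'" by (rule measure_Un_le[OF Us E's])
  also have "measure lborel E' = 0"
    using emeasure_lborel_countable[of E'] finE' by (simp add: measure_def countable_finite)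
  finally have "1 \<le> measure lborel U" by simp
  then show ?thesis using le mU by simp
qed



definition CM :: "(real \<Rightarrow> real) \<Rightarrow> (nat \<Rightarrow> real) \<Rightarrow> nat \<Rightarrow> bool" where
  "CM u a n \<longleftrightarrow> bij_betw u X X \<and> part a n \<and> (\<forall>i<n. continuous_on {a i<..<a (Suc i)} u)"

lemma CM_struct:
  assumes "CM u a n"
  shows "\<exists>s c d. \<forall>i<n. (s i = 1 \<or> s i = -1) \<and>
     (\<forall>x\<in>{a i<..<a (Suc i)}. \<forall>y\<in>{a i<..<a (Suc i)}. x < y \<longrightarrow> s i * u x < s i * u y)
     \<and> c i < d i \<and> u ` {a i<..<a (Suc i)} = {c i<..<d i}"
proof -
  have bij: "bij_betw u X X" and p: "part a n" and cont: "\<And>i. i < n \<Longrightarrow> continuous_on {a i<..<a (Suc i)} u"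
    using assms by (auto simp: CM_def)
  have "\<forall>i. \<exists>t. i < n \<longrightarrow> (fst t = 1 \<or> fst t = -1) \<and>
     (\<forall>x\<in>{a i<..<a (Suc i)}. \<forall>y\<in>{a i<..<a (Suc i)}. x < y \<longrightarrow> fst t * u x < fst t * u y)
     \<and> fst (snd t) < snd (snd t) \<and> u ` {a i<..<a (Suc i)} = {fst (snd t)<..<snd (snd t)}"
  proof (intro allI)
    fix i
    show "\<exists>t. i < n \<longrightarrow> (fst t = 1 \<or> fst t = -1) \<and>
     (\<forall>x\<in>{a i<..<a (Suc i)}. \<forall>y\<in>{a i<..<a (Suc i)}. x < y \<longrightarrow> fst t * u x < fst t * u y)
     \<and> fst (snd t) < snd (snd t) \<and> u ` {a i<..<a (Suc i)} = {fst (snd t)<..<snd (snd t)}"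
    proof (cases "i < n")
      case True
      have sub: "{a i<..<a (Suc i)} \<subseteq> X" using part_piece_X[OF p True] .
      have lt: "a i < a (Suc i)" using p True by (auto simp: part_def)
      have inj: "inj_on u {a i<..<a (Suc i)}" using bij sub by (meson bij_betw_def inj_on_subset)
      have "u ` {a i<..<a (Suc i)} \<subseteq> X" using bij sub by (auto simp: bij_betw_def)
      then have bd: "u ` {a i<..<a (Suc i)} \<subseteq> {0..1}" by (auto simp: X_def)
      obtain s c d where "(s = 1 \<or> s = -1) \<and>
          (\<forall>x\<in>{a i<..<a (Suc i)}. \<forall>y\<in>{a i<..<a (Suc i)}. x < y \<longrightarrow> s * u x < s * u y)
          \<and> c < d \<and> u ` {a i<..<a (Suc i)} = {c<..<d}"
        using piece_struct[OF lt cont[OF True] inj bd] by blast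
      then show ?thesis by (intro exI[of _ "(s, c, d)"]) auto
    qed auto
  qed
  then obtain T where T: "\<forall>i. i < n \<longrightarrow> (fst (T i) = 1 \<or> fst (T i) = -1) \<and>
     (\<forall>x\<in>{a i<..<a (Suc i)}. \<forall>y\<in>{a i<..<a (Suc i)}. x < y \<longrightarrow> fst (T i) * u x < fst (T i) * u y)
     \<and> fst (snd (T i)) < snd (snd (T i)) \<and> u ` {a i<..<a (Suc i)} = {fst (snd (T i))<..<snd (snd (T i))}"
    using choice[of "\<lambda>i t. i < n \<longrightarrow> (fst t = 1 \<or> fst t = -1) \<and>
     (\<forall>x\<in>{a i<..<a (Suc i)}. \<forall>y\<in>{a i<..<a (Suc i)}. x < y \<longrightarrow> fst t * u x < fst t * u y)
     \<and> fst (snd t) < snd (snd t) \<and> u ` {a i<..<a (Suc i)} = {fst (snd t)<..<snd (snd t)}"] by blast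
  show ?thesis
    by (rule exI[of _ "\<lambda>i. fst (T i)"], rule exI[of _ "\<lambda>i. fst (snd (T i))"],
        rule exI[of _ "\<lambda>i. snd (snd (T i))"]) (use T in blast)
qed

lemma CM_disj:
  assumes "CM u a n" "i < n" "j < n" "i \<noteq> j"
  shows "u ` {a i<..<a (Suc i)} \<inter> u ` {a j<..<a (Suc j)} = {}"
proof -
  have bij: "bij_betw u X X" and p: "part a n" using assms by (auto simp: CM_def)
  have "inj_on u X" using bij by (simp add: bij_betw_def)
  moreover have "{a i<..<a (Suc i)} \<subseteq> X" "{a j<..<a (Suc j)} \<subseteq> X"
    using part_piece_X[OF p] assms by auto
  moreover have "{a i<..<a (Suc i)} \<inter> {a j<..<a (Suc j)} = {}" using part_pieces_disj[OF p assms(2-4)] .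
  ultimately show ?thesis by (metis image_empty inj_on_image_Int)
qed

lemma CM_cover:
  assumes "CM u a n"
  shows "X - (\<Union>i<n. u ` {a i<..<a (Suc i)}) \<subseteq> u ` (a ` {..<n})"
proof
  have bij: "bij_betw u X X" and p: "part a n" using assms by (auto simp: CM_def)
  fix y assume y: "y \<in> X - (\<Union>i<n. u ` {a i<..<a (Suc i)})"
  then obtain x where x: "x \<in> X" "y = u x" using bij by (metis DiffD1 bij_betw_def imageE)
  obtain i where i: "i < n" "a i \<le> x" "x < a (Suc i)" using part_cover[OF p x(1)] by auto
  have "x = a i"
  proof (rule ccontr)
    assume "x \<noteq> a i"
    then have "x \<in> {a i<..<a (Suc i)}" using i by auto
    then have "y \<in> (\<Union>i<n. u ` {a i<..<a (Suc i)})" using x i by blast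
    then show False using y by blast
  qed
  then show "y \<in> u ` (a ` {..<n})" using x i by auto
qed



lemma main_g:
  assumes cm: "CM u a n"
  shows "\<exists>\<phi> g. ord_homeo \<phi> \<and> ord_homeo (inv_into X \<phi>) \<and> bij_betw \<phi> X X \<and> g \<in> IET_hat \<and> (\<forall>x\<in>X. u x = g (\<phi> x))"
proof -
  have bij: "bij_betw u X X" and p: "part a n" using cm by (auto simp: CM_def)
  define P where "P = (\<lambda>i. {a i<..<a (Suc i)})"
  obtain s c d where sc: "\<forall>i<n. (s i = 1 \<or> s i = -1) \<and>
     (\<forall>x\<in>{a i<..<a (Suc i)}. \<forall>y\<in>{a i<..<a (Suc i)}. x < y \<longrightarrow> s i * u x < s i * u y)
     \<and> c i < d i \<and> u ` {a i<..<a (Suc i)} = {c i<..<d i}"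
    using CM_struct[OF cm] by blast
  have s1: "s i = 1 \<or> s i = -1" if "i < n" for i using sc that by blast
  have smono: "s i * u x < s i * u y" if "i < n" "x \<in> P i" "y \<in> P i" "x < y" for i x y
    using sc that unfolding P_def by blast
  have cd: "c i < d i" if "i < n" for i using sc that by blast
  have img: "u ` P i = {c i<..<d i}" if "i < n" for i using sc that unfolding P_def by blast
  have PX: "P i \<subseteq> X" if "i < n" for i unfolding P_def using part_piece_X[OF p that] .
  have sum1: "(\<Sum>i<n. d i - c i) = 1"
  proof (rule measure_tiling[of n c d "u ` (a ` {..<n})"])
    show "c i < d i" if "i < n" for i using cd that .
    show "{c i<..<d i} \<subseteq> X" if "i < n" for i
      using img[OF that] PX[OF that] bij by (auto simp: bij_betw_def)
    show "{c i<..<d i} \<inter> {c j<..<d j} = {}" if "i < n" "j < n" "i \<noteq> j" for i j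
      using CM_disj[OF cm that] img that unfolding P_def by auto
    show "finite (u ` a ` {..<n})" by auto
    have "(\<Union>i<n. {c i<..<d i}) = (\<Union>i<n. u ` {a i<..<a (Suc i)})"
      using img unfolding P_def by auto
    then show "X - (\<Union>i<n. {c i<..<d i}) \<subseteq> u ` a ` {..<n}" using CM_cover[OF cm] by simp
  qed
  define l where "l = (\<lambda>i. d i - c i)"
  define S where "S = (\<lambda>k. \<Sum>j<k. l j)"
  have SSuc: "S (Suc i) = S i + l i" for i by (simp add: S_def)
  have pS: "part S n" unfolding part_def using sum1 cd SSuc by (auto simp: S_def l_def)
  define e where "e = (\<lambda>i. if s i = 1 then c i else - d i)"
  have rng: "0 < s i * u x - e i \<and> s i * u x - e i < l i" if "i < n" "x \<in> P i" for i x
  proof -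
    have "u x \<in> {c i<..<d i}" using img[OF that(1)] that(2) by auto
    then show ?thesis using s1[OF that(1)] by (auto simp: e_def l_def)
  qed
  have surj: "\<exists>x\<in>P i. s i * u x - e i = t" if ii: "i < n" and tt: "0 < t" "t < l i" for i t
  proof -
    define y where "y = s i * (t + e i)"
    have "y \<in> {c i<..<d i}" using s1[OF ii] tt by (auto simp: y_def e_def l_def)
    then obtain x where x: "x \<in> P i" "u x = y" using img[OF ii] by (metis imageE)
    have "s i * s i = 1" using s1[OF ii] by auto
    then have "s i * u x = t + e i" using x by (simp add: y_def mult.assoc[symmetric])
    then show ?thesis using x(1) by (intro bexI[of _ x]) auto
  qed
  define idx where "idx = (\<lambda>x. THE i. i < n \<and> a i \<le> x \<and> x < a (Suc i))"
  have idx: "idx x < n \<and> a (idx x) \<le> x \<and> x < a (Suc (idx x))" if "x \<in> X" for x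
  proof -
    have "\<exists>!i. i < n \<and> a i \<le> x \<and> x < a (Suc i)"
      using part_cover[OF p that] part_idx_unique[OF p] by blast
    then show ?thesis unfolding idx_def by (rule theI')
  qed
  have idx_eq: "idx x = i" if "i < n" "a i \<le> x" "x < a (Suc i)" for i x
    unfolding idx_def using that part_idx_unique[OF p] by (intro the_equality) blast+
  define \<phi> where "\<phi> = (\<lambda>x. S (idx x) + (if x = a (idx x) then 0 else s (idx x) * u x - e (idx x)))"
  have \<phi>_piece: "\<phi> x = S i + (s i * u x - e i)" if "i < n" "x \<in> P i" for i x
  proof -
    have "idx x = i" using that by (intro idx_eq) (auto simp: P_def)
    then show ?thesis using that by (auto simp: \<phi>_def P_def)
  qed
  have \<phi>_pt: "\<phi> (a i) = S i" if "i < n" for i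
  proof -
    have "idx (a i) = i" using that p by (intro idx_eq) (auto simp: part_def)
    then show ?thesis by (simp add: \<phi>_def)
  qed
  have \<phi>_rng: "S (idx x) \<le> \<phi> x \<and> \<phi> x < S (Suc (idx x))" if "x \<in> X" for x
  proof (cases "x = a (idx x)")
    case True
    then show ?thesis using \<phi>_pt[of "idx x"] idx[OF that] pS SSuc[of "idx x"] rng
      by (metis add.right_neutral less_add_same_cancel1 order.refl part_def)
  next
    case False
    then have "x \<in> P (idx x)" using idx[OF that] by (auto simp: P_def)
    then show ?thesis using \<phi>_piece[of "idx x" x] rng[of "idx x" x] idx[OF that] SSuc[of "idx x"] by auto
  qed
  have sm: "strict_mono_on X \<phi>"
  proof (rule strict_mono_onI)
    fix x y assume xy: "x \<in> X" "y \<in> X" "x < y"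
    define i where "i = idx x"
    define j where "j = idx y"
    have ix: "i < n" "a i \<le> x" "x < a (Suc i)" using idx[OF xy(1)] by (auto simp: i_def)
    have jy: "j < n" "a j \<le> y" "y < a (Suc j)" using idx[OF xy(2)] by (auto simp: j_def)
    have "\<not> j < i"
    proof
      assume "j < i"
      then have "a (Suc j) \<le> a i" using part_le[OF p, of "Suc j" i] ix by auto
      then show False using ix jy xy by auto
    qed
    then consider "i < j" | "i = j" by linarith
    then show "\<phi> x < \<phi> y"
    proof cases
      case 1
      have "\<phi> x < S (Suc i)" using \<phi>_rng[OF xy(1)] by (simp add: i_def)
      also have "S (Suc i) \<le> S j" using part_le[OF pS, of "Suc i" j] 1 jy by auto
      also have "S j \<le> \<phi> y" using \<phi>_rng[OF xy(2)] by (simp add: j_def)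
      finally show ?thesis .
    next
      case 2
      have yP: "y \<in> P i" using 2 jy ix xy by (auto simp: P_def)
      show ?thesis
      proof (cases "x = a i")
        case True
        then show ?thesis using \<phi>_pt[OF ix(1)] \<phi>_piece[OF ix(1) yP] rng[OF ix(1) yP] by auto
      next
        case False
        then have xP: "x \<in> P i" using ix by (auto simp: P_def)
        show ?thesis using \<phi>_piece[OF ix(1) yP] \<phi>_piece[OF ix(1) xP] smono[OF ix(1) xP yP xy(3)] by auto
      qed
    qed
  qed
  have im: "\<phi> ` X = X"
  proof
    show "\<phi> ` X \<subseteq> X"
    proof
      fix t assume "t \<in> \<phi> ` X"
      then obtain x where x: "x \<in> X" "t = \<phi> x" by auto
      have "0 \<le> S (idx x)" "S (Suc (idx x)) \<le> 1" using part_range[OF pS, of "idx x"] part_range[OF pS, of "Suc (idx x)"]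
        idx[OF x(1)] by auto
      then show "t \<in> X" using \<phi>_rng[OF x(1)] x by (auto simp: X_def)
    qed
    show "X \<subseteq> \<phi> ` X"
    proof
      fix t assume t: "t \<in> X"
      obtain j where j: "j < n" "S j \<le> t" "t < S (Suc j)" using part_cover[OF pS t] by auto
      show "t \<in> \<phi> ` X"
      proof (cases "t = S j")
        case True
        have "a j \<in> X" using part_range[OF p, of j] part_range[OF p, of "Suc j"] p j
          by (auto simp: X_def part_def)
        then show ?thesis using True \<phi>_pt[OF j(1)] by (metis imageI)
      next
        case False
        then obtain x where x: "x \<in> P j" "s j * u x - e j = t - S j"
          using surj[of j "t - S j"] j SSuc[of j] by auto
        then have "\<phi> x = t" using \<phi>_piece[OF j(1) x(1)] by simp
        then show ?thesis using x PX[OF j(1)] by (metis imageI subsetD)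
      qed
    qed
  qed
  have oh: "ord_homeo \<phi>" "ord_homeo (inv_into X \<phi>)" using smono_ord_homeo[OF sm im] by blast+
  have injphi: "inj_on \<phi> X" using sm by (rule strict_mono_on_imp_inj_on)
  have bphi: "bij_betw \<phi> X X" using injphi im by (simp add: bij_betw_def)
  define g where "g = u \<circ> inv_into X \<phi>"
  have bg: "bij_betw g X X" unfolding g_def using bij_betw_inv_into[OF bphi] bij by (rule bij_betw_trans)
  have gform: "g t = s i * t + s i * (e i - S i)" if i: "i < n" and t: "t \<in> {S i<..<S (Suc i)}" for i t
  proof -
    have tX: "t \<in> X" using t part_range[OF pS, of i] part_range[OF pS, of "Suc i"] i by (auto simp: X_def)
    define x where "x = inv_into X \<phi> t"
    have xX: "x \<in> X" using tX im unfolding x_def by (metis inv_into_into)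
    have phx: "\<phi> x = t" using tX im unfolding x_def by (metis f_inv_into_f)
    have "idx x = i"
      using part_idx_unique[OF pS i, of "idx x" t] \<phi>_rng[OF xX] idx[OF xX] t phx by auto
    then have ax: "a i \<le> x" "x < a (Suc i)" using idx[OF xX] by auto
    have "x \<noteq> a i" using \<phi>_pt[OF i] phx t by auto
    then have xP: "x \<in> P i" using ax by (auto simp: P_def)
    have "s i * u x = t - S i + e i" using \<phi>_piece[OF i xP] phx by simp
    then have "s i * (s i * u x) = s i * (t - S i + e i)" by simp
    moreover have "s i * s i = 1" using s1[OF i] by auto
    ultimately have "u x = s i * (t - S i + e i)" by (simp add: mult.assoc[symmetric])
    then show ?thesis by (simp add: g_def x_def[symmetric] algebra_simps)
  qed
  have "g \<in> IET_hat"
    unfolding IET_hat_def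
  proof (intro CollectI conjI exI[of _ S] exI[of _ n] allI impI)
    show "bij_betw g X X" using bg .
    show "S 0 = 0" "S n = 1" using pS by (auto simp: part_def)
    show "S i < S (Suc i)" if "i < n" for i using pS that by (auto simp: part_def)
    fix i assume i: "i < n"
    show "\<exists>c. (\<forall>x\<in>{S i<..<S (Suc i)}. g x = x + c) \<or> (\<forall>x\<in>{S i<..<S (Suc i)}. g x = - x + c)"
      using s1[OF i] gform[OF i] by (intro exI[of _ "s i * (e i - S i)"]) auto
  qed
  moreover have "\<forall>x\<in>X. u x = g (\<phi> x)" using injphi by (auto simp: g_def)
  ultimately show ?thesis using oh bphi by blast
qed



lemma PC_CM:
  assumes "h \<in> PC_hat"
  shows "\<exists>a n. CM h a n"
proof -
  obtain F where bij: "bij_betw h X X" and F: "finite F" and cont: "\<forall>x\<in>X - F. continuous (at x within X) h"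
    using assms by (auto simp: PC_hat_def)
  obtain a n where p: "part a n" and gap: "\<forall>i<n. {a i<..<a (Suc i)} \<inter> F = {}"
    using part_exists[OF F] by blast
  have "continuous_on {a i<..<a (Suc i)} h" if i: "i < n" for i
  proof -
    have sub: "{a i<..<a (Suc i)} \<subseteq> X" using part_piece_X[OF p i] .
    have "continuous (at x within {a i<..<a (Suc i)}) h" if x: "x \<in> {a i<..<a (Suc i)}" for x
    proof -
      have "x \<notin> F" using x gap i by blast
      then have "x \<in> X - F" using x sub by blast
      then have "continuous (at x within X) h" using cont by blast
      then show ?thesis using sub by (rule continuous_within_subset)
    qed
    then show ?thesis by (simp add: continuous_on_eq_continuous_within)
  qed
  then have "CM h a n" using bij p by (simp add: CM_def)
  then show ?thesis by blast
qed

lemma refine: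
  assumes cm: "CM u a n"
  shows "\<exists>b m. part b m \<and> (\<forall>k<m. \<exists>i<n. {b k<..<b (Suc k)} \<subseteq> u ` {a i<..<a (Suc i)})"
proof -
  have bij: "bij_betw u X X" and p: "part a n" using cm by (auto simp: CM_def)
  obtain s c d where sc: "\<forall>i<n. (s i = 1 \<or> s i = -1) \<and>
     (\<forall>x\<in>{a i<..<a (Suc i)}. \<forall>y\<in>{a i<..<a (Suc i)}. x < y \<longrightarrow> s i * u x < s i * u y)
     \<and> c i < d i \<and> u ` {a i<..<a (Suc i)} = {c i<..<d i}"
    using CM_struct[OF cm] by blast
  have cd: "c i < d i" if "i < n" for i using sc that by blast
  have img: "u ` {a i<..<a (Suc i)} = {c i<..<d i}" if "i < n" for i using sc that by blast
  have disj: "{c i<..<d i} \<inter> {c j<..<d j} = {}" if "i < n" "j < n" "i \<noteq> j" for i j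
    using CM_disj[OF cm that] img that by auto
  define E where "E = u ` (a ` {..<n})"
  have cov: "\<exists>i<n. y \<in> {c i<..<d i}" if "y \<in> X" "y \<notin> E" for y
    using CM_cover[OF cm] that img unfolding E_def by blast
  obtain b m where pb: "part b m" and gap: "\<forall>k<m. {b k<..<b (Suc k)} \<inter> E = {}"
    using part_exists[of E] unfolding E_def by blast
  have "\<exists>i<n. {b k<..<b (Suc k)} \<subseteq> u ` {a i<..<a (Suc i)}" if k: "k < m" for k
  proof -
    define G where "G = {b k<..<b (Suc k)}"
    have GX: "G \<subseteq> X" unfolding G_def using part_piece_X[OF pb k] .
    have GE: "G \<inter> E = {}" unfolding G_def using gap k by auto
    have inJ: "\<exists>i<n. y \<in> {c i<..<d i}" if "y \<in> G" for y using cov GX GE that by blast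
    have lt: "b k < b (Suc k)" using pb k by (auto simp: part_def)
    define z where "z = (b k + b (Suc k)) / 2"
    have zG: "z \<in> G" using lt by (auto simp: G_def z_def)
    obtain i where i: "i < n" "z \<in> {c i<..<d i}" using inJ[OF zG] by blast
    have "G \<subseteq> {c i<..<d i}"
    proof
      fix w assume wG: "w \<in> G"
      show "w \<in> {c i<..<d i}"
      proof (rule ccontr)
        assume nw: "w \<notin> {c i<..<d i}"
        then consider "d i \<le> w" | "w \<le> c i" by auto
        then show False
        proof cases
          case 1
          then have "d i \<in> G" using wG zG i by (auto simp: G_def)
          then obtain j where j: "j < n" "d i \<in> {c j<..<d j}" using inJ by blast
          have "j \<noteq> i" using j by auto
          define t where "t = (max (c i) (c j) + d i) / 2"
          have "t \<in> {c i<..<d i} \<inter> {c j<..<d j}" using j cd[OF i(1)] by (auto simp: t_def)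
          then show False using disj[OF i(1) j(1)] \<open>j \<noteq> i\<close> by auto
        next
          case 2
          then have "c i \<in> G" using wG zG i by (auto simp: G_def)
          then obtain j where j: "j < n" "c i \<in> {c j<..<d j}" using inJ by blast
          have "j \<noteq> i" using j by auto
          define t where "t = (c i + min (d i) (d j)) / 2"
          have "t \<in> {c i<..<d i} \<inter> {c j<..<d j}" using j cd[OF i(1)] by (auto simp: t_def)
          then show False using disj[OF i(1) j(1)] \<open>j \<noteq> i\<close> by auto
        qed
      qed
    qed
    then show ?thesis using i img unfolding G_def by blast
  qed
  then show ?thesis using pb by blast
qed

lemma CM_inv:
  assumes cm: "CM u a n"
  shows "\<exists>b m. CM (inv_into X u) b m"
proof -
  have bij: "bij_betw u X X" and p: "part a n"
    and cont: "\<And>i. i < n \<Longrightarrow> continuous_on {a i<..<a (Suc i)} u" using cm by (auto simp: CM_def)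
  obtain b m where pb: "part b m" and sub: "\<forall>k<m. \<exists>i<n. {b k<..<b (Suc k)} \<subseteq> u ` {a i<..<a (Suc i)}"
    using refine[OF cm] by blast
  have injX: "inj_on u X" using bij by (simp add: bij_betw_def)
  have "continuous_on {b k<..<b (Suc k)} (inv_into X u)" if k: "k < m" for k
  proof -
    obtain i where i: "i < n" and Gs: "{b k<..<b (Suc k)} \<subseteq> u ` {a i<..<a (Suc i)}" using sub k by blast
    have PX: "{a i<..<a (Suc i)} \<subseteq> X" using part_piece_X[OF p i] .
    have inj: "inj_on u {a i<..<a (Suc i)}" using injX PX by (rule inj_on_subset)
    have pc: "path_connected {a i<..<a (Suc i)}" by (simp add: convex_imp_path_connected)
    obtain w where w: "homeomorphism {a i<..<a (Suc i)} (u ` {a i<..<a (Suc i)}) u w"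
      using homeomorphism_into_1d[OF pc cont[OF i] refl inj] by blast
    have cw: "continuous_on (u ` {a i<..<a (Suc i)}) w" using w by (simp add: homeomorphism_def)
    have eq: "w y = inv_into X u y" if y: "y \<in> u ` {a i<..<a (Suc i)}" for y
    proof -
      have "w y \<in> {a i<..<a (Suc i)}" "u (w y) = y" using w y by (auto simp: homeomorphism_def)
      then show ?thesis using injX PX by (metis inv_into_f_f subsetD)
    qed
    have "continuous_on {b k<..<b (Suc k)} w" using cw Gs by (rule continuous_on_subset)
    then show ?thesis by (rule continuous_on_cong[THEN iffD1, rotated 2]) (use eq Gs in auto)
  qed
  moreover have "bij_betw (inv_into X u) X X" using bij by (rule bij_betw_inv_into)
  ultimately have "CM (inv_into X u) b m" using pb by (simp add: CM_def)
  then show ?thesis by blast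
qed

lemma IET_CM:
  assumes "g \<in> IET_hat"
  shows "\<exists>a n. CM g a n \<and> (\<forall>i<n. \<exists>c. (\<forall>x\<in>{a i<..<a (Suc i)}. g x = x + c) \<or> (\<forall>x\<in>{a i<..<a (Suc i)}. g x = - x + c))"
proof -
  obtain a n where bij: "bij_betw g X X" and p: "part a n"
    and f: "\<forall>i<n. \<exists>c. (\<forall>x\<in>{a i<..<a (Suc i)}. g x = x + c) \<or> (\<forall>x\<in>{a i<..<a (Suc i)}. g x = - x + c)"
    using assms unfolding IET_hat_def part_def by blast
  have "continuous_on {a i<..<a (Suc i)} g" if i: "i < n" for i
  proof -
    obtain c where "(\<forall>x\<in>{a i<..<a (Suc i)}. g x = x + c) \<or> (\<forall>x\<in>{a i<..<a (Suc i)}. g x = - x + c)"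
      using f i by blast
    then show ?thesis
    proof
      assume e: "\<forall>x\<in>{a i<..<a (Suc i)}. g x = x + c"
      have "continuous_on {a i<..<a (Suc i)} (\<lambda>x. x + c)" by (intro continuous_intros)
      then show ?thesis by (rule continuous_on_cong[THEN iffD1, rotated 2]) (use e in auto)
    next
      assume e: "\<forall>x\<in>{a i<..<a (Suc i)}. g x = - x + c"
      have "continuous_on {a i<..<a (Suc i)} (\<lambda>x. - x + c)" by (intro continuous_intros)
      then show ?thesis by (rule continuous_on_cong[THEN iffD1, rotated 2]) (use e in auto)
    qed
  qed
  then have "CM g a n" using bij p by (simp add: CM_def)
  then show ?thesis using f by blast
qed

lemma IET_inv:
  assumes g: "g \<in> IET_hat"
  shows "inv_into X g \<in> IET_hat"
proof -
  obtain a n where cm: "CM g a n"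
    and f: "\<forall>i<n. \<exists>c. (\<forall>x\<in>{a i<..<a (Suc i)}. g x = x + c) \<or> (\<forall>x\<in>{a i<..<a (Suc i)}. g x = - x + c)"
    using IET_CM[OF g] by blast
  have bij: "bij_betw g X X" and p: "part a n" using cm by (auto simp: CM_def)
  have injX: "inj_on g X" using bij by (simp add: bij_betw_def)
  obtain b m where pb: "part b m" and sub: "\<forall>k<m. \<exists>i<n. {b k<..<b (Suc k)} \<subseteq> g ` {a i<..<a (Suc i)}"
    using refine[OF cm] by blast
  have piece: "\<exists>c. (\<forall>y\<in>{b k<..<b (Suc k)}. inv_into X g y = y + c) \<or> (\<forall>y\<in>{b k<..<b (Suc k)}. inv_into X g y = - y + c)"
    if k: "k < m" for k
  proof -
    obtain i where i: "i < n" and Gs: "{b k<..<b (Suc k)} \<subseteq> g ` {a i<..<a (Suc i)}" using sub k by blast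
    have PX: "{a i<..<a (Suc i)} \<subseteq> X" using part_piece_X[OF p i] .
    have inv: "inv_into X g (g x) = x" if "x \<in> {a i<..<a (Suc i)}" for x
      using injX PX that by (metis inv_into_f_f subsetD)
    obtain c where "(\<forall>x\<in>{a i<..<a (Suc i)}. g x = x + c) \<or> (\<forall>x\<in>{a i<..<a (Suc i)}. g x = - x + c)"
      using f i by blast
    then show ?thesis
    proof
      assume e: "\<forall>x\<in>{a i<..<a (Suc i)}. g x = x + c"
      have "inv_into X g y = y + (- c)" if y: "y \<in> {b k<..<b (Suc k)}" for y
      proof -
        obtain x where x: "x \<in> {a i<..<a (Suc i)}" "y = g x" using Gs y by blast
        then show ?thesis using inv[OF x(1)] e by auto
      qed
      then show ?thesis by blast
    next
      assume e: "\<forall>x\<in>{a i<..<a (Suc i)}. g x = - x + c"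
      have "inv_into X g y = - y + c" if y: "y \<in> {b k<..<b (Suc k)}" for y
      proof -
        obtain x where x: "x \<in> {a i<..<a (Suc i)}" "y = g x" using Gs y by blast
        then show ?thesis using inv[OF x(1)] e by auto
      qed
      then show ?thesis by blast
    qed
  qed
  have "bij_betw (inv_into X g) X X" using bij by (rule bij_betw_inv_into)
  then show ?thesis unfolding IET_hat_def using pb piece unfolding part_def by blast
qed

theorem proposition2p5:
  assumes "h \<in> PC_hat"
  shows "\<exists>\<phi> \<psi> f g. ord_homeo \<phi> \<and> ord_homeo \<psi> \<and> f \<in> IET_hat \<and> g \<in> IET_hat \<and>
           (\<forall>x\<in>X. h x = \<psi> (f x)) \<and> (\<forall>x\<in>X. h x = g (\<phi> x))"
proof -
  obtain a n where cm: "CM h a n" using PC_CM[OF assms] by blast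
  have bij: "bij_betw h X X" using cm by (simp add: CM_def)
  obtain \<phi> g where \<phi>: "ord_homeo \<phi>" and g: "g \<in> IET_hat" and eq1: "\<forall>x\<in>X. h x = g (\<phi> x)"
    using main_g[OF cm] by blast
  obtain b m where cm': "CM (inv_into X h) b m" using CM_inv[OF cm] by blast
  obtain \<phi>' g' where \<psi>: "ord_homeo (inv_into X \<phi>')" and b\<phi>': "bij_betw \<phi>' X X"
    and g': "g' \<in> IET_hat" and eq2: "\<forall>y\<in>X. inv_into X h y = g' (\<phi>' y)"
    using main_g[OF cm'] by blast
  have f: "inv_into X g' \<in> IET_hat" using IET_inv[OF g'] .
  have bg': "bij_betw g' X X" using g' by (simp add: IET_hat_def)
  have "h x = inv_into X \<phi>' (inv_into X g' x)" if x: "x \<in> X" for x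
  proof -
    define y where "y = h x"
    have yX: "y \<in> X" using bij x by (auto simp: y_def bij_betw_def)
    have "inv_into X h y = x" using bij x by (simp add: y_def bij_betw_def inv_into_f_f)
    then have "x = g' (\<phi>' y)" using eq2 yX by auto
    moreover have "\<phi>' y \<in> X" using b\<phi>' yX by (auto simp: bij_betw_def)
    ultimately have "inv_into X g' x = \<phi>' y" using bg' by (simp add: bij_betw_def inv_into_f_f)
    then show ?thesis using b\<phi>' yX by (simp add: y_def bij_betw_def inv_into_f_f)
  qed
  then show ?thesis using \<phi> \<psi> g f eq1 by blast
qed

end
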